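(* Let $v\ge 0$ and consider the problem $$\min_{y\in\mathbb{R}^{n^+}}\ \sum_{j=1}^{n^+} y_j^{1/\alpha}\quad\text{s.t.}\quad 0\le y_1\le y_2\le\cdots\le y_{n^+},\qquad \sum_{j=1}^{n^+} h^+_j y_j=v .$$ Let $J$ be the transitional index and $S:=\sum_{j'=1}^{J}h^+_{j'}$. Define $$Y:=\frac{v\,S^{\frac{\alpha}{1-\alpha}}}{S^{\frac{1}{1-\alpha}}+J^{\frac{\alpha}{1-\alpha}}\sum_{j'=J+1}^{n^+}(h^+_{j'})^{\frac{1}{1-\alpha}}}\ (\ge 0).$$ Then the optimal solution of this problem is $y^*\in\mathbb{R}^{n^+}$ given by $y^*_j=Y$ for $1\le j\le J$ and $y^*_j=\left(\frac{J h^+_j}{S}\right)^{\frac{\alpha}{1-\alpha}}Y$ for $J+1\le j\le n^+$.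
   Context: Fix $N\in\mathbb{N}$, $\alpha\in(0,1)$ and an integer $1\le n^+\le N$. A function $f:[0,1]\to\mathbb{R}$ is inverse S-shaped if it is strictly increasing, continuously differentiable, and there is $x_0\in[0,1]$ such that $f'$ is strictly decreasing on $[0,x_0]$ and strictly increasing on $[x_0,1]$. Let $W^+:[0,1]\to[0,1]$ be inverse S-shaped with $W^+(0)=0$, $W^+(1)=1$. Decision weights: $h^+_j:=W^+\!\left(\frac{n^+-j+1}{N}\right)-W^+\!\left(\frac{n^+-j}{N}\right)$ for $j=1,\dots,n^+$. The transitional index is $J:=\min\{j\in\{1,\dots,n^+\}: j\,h^+_{j+1}\ge \sum_{j'=1}^{j}h^+_{j'}\}$, with the convention $h^+_{n^++1}=\infty$. *)

theory Defs
  imports "HOL-Analysis.Analysis"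
begin

definition inverse_S_shaped :: "(real \<Rightarrow> real) \<Rightarrow> bool" where
  "inverse_S_shaped f \<longleftrightarrow>
     strict_mono_on {0..1} f \<and>
     (\<exists>f'. (\<forall>x\<in>{0..1}. (f has_real_derivative f' x) (at x within {0..1})) \<and>
           continuous_on {0..1} f' \<and>
           (\<exists>x0\<in>{0..1}. strict_antimono_on {0..x0} f' \<and> strict_mono_on {x0..1} f'))"

definition dweight :: "(real \<Rightarrow> real) \<Rightarrow> nat \<Rightarrow> nat \<Rightarrow> nat \<Rightarrow> real" where
  "dweight W N np j = W (real (np - j + 1) / real N) - W ((real np - real j) / real N)"

text \<open>Transitional index; the convention h^+_{n^+ + 1} = \<infinity> makes j = n^+ always qualify.\<close>
definition trans_index :: "(real \<Rightarrow> real) \<Rightarrow> nat \<Rightarrow> nat \<Rightarrow> nat" where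
  "trans_index W N np = (LEAST j. j \<in> {1..np} \<and>
      (j = np \<or> real j * dweight W N np (j + 1) \<ge> (\<Sum>j'=1..j. dweight W N np j')))"

definition feasible :: "(real \<Rightarrow> real) \<Rightarrow> nat \<Rightarrow> nat \<Rightarrow> real \<Rightarrow> (nat \<Rightarrow> real) \<Rightarrow> bool" where
  "feasible W N np v y \<longleftrightarrow>
     (np \<ge> 1 \<longrightarrow> 0 \<le> y 1) \<and> (\<forall>j\<in>{1..<np}. y j \<le> y (j + 1)) \<and>
     (\<Sum>j=1..np. dweight W N np j * y j) = v"

definition objective :: "real \<Rightarrow> nat \<Rightarrow> (nat \<Rightarrow> real) \<Rightarrow> real" where
  "objective \<alpha> np y = (\<Sum>j=1..np. y j powr (1 / \<alpha>))"

end

theory Submission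
  imports Defs
begin


lemma phi_sign:
  fixes f' :: "real \<Rightarrow> real"
  assumes x0: "x0 \<in> {0..1}" "strict_antimono_on {0..x0} f'" "strict_mono_on {x0..1} f'"
    and d: "\<delta> > 0" and st: "0 \<le> s" "s < t" "t + \<delta> \<le> 1"
    and ge: "f' (s + \<delta>) - f' s \<ge> 0"
  shows "f' (t + \<delta>) - f' t > 0"
proof (cases "x0 \<le> t")
  case True
  have "f' t < f' (t+\<delta>)"
    using monotone_onD[OF x0(3), of t "t+\<delta>"] True d st x0(1) by auto
  then show ?thesis by simp
next
  case False
  have "f' t < f' s"
    using monotone_onD[OF x0(2), of s t] False d st by auto
  have "x0 < s + \<delta>"
  proof (rule ccontr)
    assume "\<not> x0 < s + \<delta>"
    then have "f' (s+\<delta>) < f' s"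
      using monotone_onD[OF x0(2), of s "s+\<delta>"] d st by auto
    then show False using ge by simp
  qed
  then have "f' (s+\<delta>) < f' (t+\<delta>)"
    using monotone_onD[OF x0(3), of "s+\<delta>" "t+\<delta>"] d st x0(1) by auto
  then show ?thesis using ge \<open>f' t < f' s\<close> by simp
qed

lemma quasi_F:
  fixes W f' :: "real\<Rightarrow>real"
  assumes der: "\<forall>x\<in>{0..1}. (W has_real_derivative f' x) (at x within {0..1})"
    and x0: "x0 \<in> {0..1}" "strict_antimono_on {0..x0} f'" "strict_mono_on {x0..1} f'"
    and d: "\<delta> > 0" and abc: "0 \<le> a" "a < b" "b < c" "c + \<delta> \<le> 1"
  shows "W (b+\<delta>) - W b < max (W (a+\<delta>) - W a) (W (c+\<delta>) - W c)"
proof -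
  define F where "F = (\<lambda>s. W (s+\<delta>) - W s)"
  have contW: "continuous_on {0..1} W"
    using der by (metis DERIV_continuous continuous_on_eq_continuous_within)
  have derF: "(F has_real_derivative (f' (z+\<delta>) - f' z)) (at z)" if "a < z" "z < c" for z
  proof -
    have i1: "z \<in> interior {0..1::real}" using that abc d by auto
    have i2: "z + \<delta> \<in> interior {0..1::real}" using that abc d by auto
    have "(W has_real_derivative f' z) (at z)"
      using der[rule_format, of z] i1 at_within_interior[OF i1] by auto
    moreover have "(W has_real_derivative f' (z+\<delta>)) (at (z+\<delta>))"
      using der[rule_format, of "z+\<delta>"] i2 at_within_interior[OF i2] by auto
    then have "((\<lambda>s. W (s+\<delta>)) has_real_derivative f' (z+\<delta>)) (at z)"
    proof -
      have "((\<lambda>s. s+\<delta>) has_real_derivative 1) (at z)" by (auto intro!: derivative_eq_intros)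
      from DERIV_chain2[OF \<open>(W has_real_derivative f' (z+\<delta>)) (at (z+\<delta>))\<close> this] show ?thesis by simp
    qed
    ultimately show ?thesis unfolding F_def by (intro derivative_eq_intros) auto
  qed
  have contF: "continuous_on {u..w} F" if "a \<le> u" "w \<le> c" for u w
  proof -
    have "continuous_on {u..w} (\<lambda>s. W (s+\<delta>))"
    proof (rule continuous_on_compose2[OF contW])
      show "continuous_on {u..w} (\<lambda>s. s+\<delta>)" by (intro continuous_intros)
      show "(\<lambda>s. s+\<delta>) ` {u..w} \<subseteq> {0..1}" using that abc d by auto
    qed
    moreover have "continuous_on {u..w} W"
    proof (rule continuous_on_subset[OF contW])
      show "{u..w} \<subseteq> {0..1}" using that abc d by auto
    qed
    ultimately show ?thesis unfolding F_def by (intro continuous_intros)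
  qed
  have difF: "F differentiable (at z)" if "a < z" "z < c" for z
    using derF[OF that] real_differentiable_def by blast
  have c1: "continuous_on {a..b} F" using contF abc by auto
  have c2: "continuous_on {b..c} F" using contF abc by auto
  obtain l1 z1 where z1: "a < z1" "z1 < b" "DERIV F z1 :> l1" "F b - F a = (b - a) * l1"
    using MVT[OF abc(2) c1] difF abc by (meson less_trans)
  obtain l2 z2 where z2: "b < z2" "z2 < c" "DERIV F z2 :> l2" "F c - F b = (c - b) * l2"
    using MVT[OF abc(3) c2] difF abc by (meson less_trans)
  have l1: "l1 = f' (z1+\<delta>) - f' z1" using DERIV_unique[OF z1(3) derF] z1 abc by auto
  have l2: "l2 = f' (z2+\<delta>) - f' z2" using DERIV_unique[OF z2(3) derF] z2 abc by auto
  show ?thesis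
  proof (rule ccontr)
    assume "\<not> ?thesis"
    then have h: "F a \<le> F b" "F c \<le> F b" unfolding F_def by auto
    then have "(b - a) * l1 \<ge> 0" using z1 by simp
    then have "l1 \<ge> 0" using z1 by (simp add: zero_le_mult_iff)
    then have "l2 > 0" using phi_sign[OF x0 d, of z1 z2] l1 l2 z1 z2 abc by auto
    then have "F c - F b > 0" using z2 by auto
    then show False using h by simp
  qed
qed

lemma tangent_strict:
  fixes p x y :: real
  assumes p: "p > 1" and x: "x \<ge> 0" and y: "y \<ge> 0" and ne: "y \<noteq> x"
  shows "x powr p + p * x powr (p - 1) * (y - x) < y powr p"
proof -
  have cont: "continuous_on {u..w} (\<lambda>t. t powr p)" if "0 \<le> u" for u w
    using that p by (intro continuous_on_powr') (auto intro!: continuous_intros)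
  have der: "((\<lambda>t. t powr p) has_real_derivative p * z powr (p - 1)) (at z)" if "z > 0" for z
    using has_real_derivative_powr[OF that] .
  show ?thesis
  proof (cases "x < y")
    case True
    have "(\<lambda>t. t powr p) differentiable (at t)" if "x < t" for t
      proof -
      have "t > 0" using that x by simp
      then show ?thesis using der[of t] real_differentiable_def by blast
    qed
    then obtain l z where z: "x < z" "z < y" "DERIV (\<lambda>t. t powr p) z :> l" "y powr p - x powr p = (y - x) * l"
      using MVT[OF True cont[OF x]] by blast
    have "l = p * z powr (p-1)" using DERIV_unique[OF z(3) der] z x by auto
    moreover have "x powr (p-1) < z powr (p-1)" using powr_less_mono2[of "p-1" x z] p x z by auto
    ultimately have "(y - x) * (p * x powr (p-1)) < (y - x) * l"
      using True p by (intro mult_strict_left_mono) auto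
    then show ?thesis using z by (simp add: algebra_simps)
  next
    case False
    then have yx: "y < x" using ne by auto
    have "(\<lambda>t. t powr p) differentiable (at t)" if "y < t" for t
      proof -
      have "t > 0" using that y by simp
      then show ?thesis using der[of t] real_differentiable_def by blast
    qed
    then obtain l z where z: "y < z" "z < x" "DERIV (\<lambda>t. t powr p) z :> l" "x powr p - y powr p = (x - y) * l"
      using MVT[OF yx cont[OF y]] by blast
    have "l = p * z powr (p-1)" using DERIV_unique[OF z(3) der] z y by auto
    moreover have "z powr (p-1) < x powr (p-1)" using powr_less_mono2[of "p-1" z x] p y z by auto
    ultimately have "(x - y) * l < (x - y) * (p * x powr (p-1))"
      using yx p by (intro mult_strict_left_mono) auto
    then show ?thesis using z by (simp add: algebra_simps)
  qed
qed

lemma tangent: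
  fixes p x y :: real
  assumes p: "p > 1" and x: "x \<ge> 0" and y: "y \<ge> 0"
  shows "x powr p + p * x powr (p - 1) * (y - x) \<le> y powr p"
proof (cases "y = x")
  case True then show ?thesis by simp
next
  case False then show ?thesis using tangent_strict[OF assms False] by simp
qed

lemma abel:
  fixes a y :: "nat \<Rightarrow> real"
  assumes T: "\<forall>k\<in>{m<..n}. 0 \<le> sum a {k..n}" and mono: "\<forall>j\<in>{m..<n}. y j \<le> y (j+1)"
    and mn: "m \<le> n"
  shows "sum a {m..n} * y m \<le> (\<Sum>j=m..n. a j * y j)"
  using mn
proof (induction m rule: inc_induct)
  case base
  then show ?case by simp
next
  case (step k)
  have e1: "sum a {k..n} = a k + sum a {Suc k..n}" using step(2) by (simp add: sum.atLeast_Suc_atMost)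
  have e2: "(\<Sum>j=k..n. a j * y j) = a k * y k + (\<Sum>j=Suc k..n. a j * y j)"
    using step(2) by (simp add: sum.atLeast_Suc_atMost)
  have "0 \<le> sum a {Suc k..n}" using T step by auto
  moreover have "y k \<le> y (Suc k)" using mono step by auto
  ultimately have "sum a {Suc k..n} * y k \<le> sum a {Suc k..n} * y (Suc k)"
    by (simp add: mult_left_mono)
  then show ?case using e1 e2 step(3) by (simp add: algebra_simps)
qed



lemma sum_split3:
  fixes f :: "nat \<Rightarrow> real"
  assumes "a \<le> b + 1" "b \<le> c"
  shows "sum f {a..c} = sum f {a..b} + sum f {Suc b..c}"
  using sum.ub_add_nat[of a b f "c-b"] assms by simp

lemma h_formula:
  assumes "i \<le> np" "N > 0"
  shows "dweight W N np i = W ((real np - real i)/real N + 1/real N) - W ((real np - real i)/real N)"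
proof -
  have "real (np - i + 1) / real N = (real np - real i)/real N + 1/real N"
    using assms by (simp add: of_nat_diff add_divide_distrib)
  then show ?thesis unfolding dweight_def by simp
qed

lemma h_quasi:
  assumes S: "inverse_S_shaped W" and nN: "np \<le> N"
    and jkl: "1 \<le> j" "j < k" "k < l" "l \<le> np"
  shows "dweight W N np k < max (dweight W N np j) (dweight W N np l)"
proof -
  obtain f' x0 where der: "\<forall>x\<in>{0..1}. (W has_real_derivative f' x) (at x within {0..1})"
    and x0: "x0 \<in> {0..1}" "strict_antimono_on {0..x0} f'" "strict_mono_on {x0..1} f'"
    using S unfolding inverse_S_shaped_def by blast
  have N0: "N > 0" using jkl nN by auto
  define s where "s = (\<lambda>i::nat. (real np - real i)/real N)"
  have hs: "dweight W N np i = W (s i + 1/real N) - W (s i)" if "i \<le> np" for i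
    using h_formula[OF that N0] unfolding s_def by simp
  have a0: "0 \<le> s l" unfolding s_def using jkl by simp
  have ab: "s l < s k" unfolding s_def using jkl N0 by (simp add: divide_strict_right_mono)
  have bc: "s k < s j" unfolding s_def using jkl N0 by (simp add: divide_strict_right_mono)
  have "s j + 1/real N = (real np - real j + 1)/real N" unfolding s_def by (simp add: add_divide_distrib)
  also have "\<dots> \<le> real N / real N" using jkl nN N0 by (intro divide_right_mono) auto
  finally have c1: "s j + 1/real N \<le> 1" using N0 by simp
  have "W (s k + 1/real N) - W (s k) < max (W (s l + 1/real N) - W (s l)) (W (s j + 1/real N) - W (s j))"
    by (rule quasi_F[OF der x0 _ a0 ab bc c1]) (use N0 in simp)
  then show ?thesis using hs jkl by (simp add: max.commute)
qed

lemma h_pos: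
  assumes S: "inverse_S_shaped W" and nN: "np \<le> N" and j: "1 \<le> j" "j \<le> np"
  shows "dweight W N np j > 0"
proof -
  have N0: "N > 0" using j nN by auto
  have sm: "strict_mono_on {0..1} W" using S unfolding inverse_S_shaped_def by blast
  have "0 \<le> (real np - real j)/real N" using j by simp
  moreover have "(real np - real j)/real N + 1/real N \<le> 1"
  proof -
    have "(real np - real j)/real N + 1/real N = (real np - real j + 1)/real N" by (simp add: add_divide_distrib)
    also have "\<dots> \<le> real N / real N" using j nN N0 by (intro divide_right_mono) auto
    finally show ?thesis using N0 by simp
  qed
  ultimately have "W ((real np - real j)/real N) < W ((real np - real j)/real N + 1/real N)"
    using monotone_onD[OF sm, of "(real np - real j)/real N" "(real np - real j)/real N + 1/real N"] N0 j nN
    by auto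
  then show ?thesis using h_formula[OF j(2) N0] by simp
qed



theorem theorem1:
  fixes W :: "real \<Rightarrow> real" and N np :: nat and \<alpha> v :: real
  assumes "0 < \<alpha>" and "\<alpha> < 1"
    and "1 \<le> np" and "np \<le> N"
    and "inverse_S_shaped W" and "W 0 = 0" and "W 1 = 1"
    and "0 \<le> v"
  defines "h \<equiv> dweight W N np"
  defines "J \<equiv> trans_index W N np"
  defines "S \<equiv> (\<Sum>j'=1..J. h j')"
  defines "Y \<equiv> v * S powr (\<alpha> / (1 - \<alpha>)) /
      (S powr (1 / (1 - \<alpha>)) + real J powr (\<alpha> / (1 - \<alpha>)) *
         (\<Sum>j'=J+1..np. h j' powr (1 / (1 - \<alpha>))))"
  defines "ystar \<equiv> (\<lambda>j. if j \<le> J then Y else (real J * h j / S) powr (\<alpha> / (1 - \<alpha>)) * Y)"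
  shows "feasible W N np v ystar
    \<and> (\<forall>y. feasible W N np v y \<longrightarrow> objective \<alpha> np ystar \<le> objective \<alpha> np y)
    \<and> (\<forall>y. feasible W N np v y \<and> objective \<alpha> np y = objective \<alpha> np ystar \<longrightarrow>
           (\<forall>j\<in>{1..np}. y j = ystar j))"
proof -
  note a0 = assms(1) and a1 = assms(2) and np1 = assms(3) and nN = assms(4) and iS = assms(5)
    and v0 = assms(8)
  define P where "P = (\<lambda>m. \<Sum>j'=1..m. h j')"
  have hpos: "h j > 0" if "1 \<le> j" "j \<le> np" for j
    unfolding h_def using h_pos[OF iS nN that] .
  have hq: "h k < max (h j) (h l)" if "1 \<le> j" "j < k" "k < l" "l \<le> np" for j k l
    unfolding h_def using h_quasi[OF iS nN that] .
  define Q where "Q = (\<lambda>j. j \<in> {1..np} \<and>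
      (j = np \<or> real j * dweight W N np (j + 1) \<ge> (\<Sum>j'=1..j. dweight W N np j')))"
  have JL: "J = (LEAST j. Q j)" unfolding J_def trans_index_def Q_def by simp
  have Qnp: "Q np" unfolding Q_def using np1 by simp
  have QJ: "Q J" unfolding JL by (rule LeastI[of Q, OF Qnp])
  have J1: "1 \<le> J" and Jnp: "J \<le> np" using QJ unfolding Q_def by auto
  have Jcond: "real J * h (J+1) \<ge> S" if "J < np"
    using QJ that unfolding Q_def S_def h_def by auto
  have Jmin: "real m * h (m+1) < P m" if "1 \<le> m" "m < J" for m
  proof -
    have "\<not> Q m" using not_less_Least[of m Q] that unfolding JL by blast
    then show ?thesis using that Jnp unfolding Q_def P_def h_def by auto
  qed
  have SP: "S = P J" unfolding S_def P_def by simp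
  have Pnn: "P m \<ge> 0" if "m \<le> np" for m
    unfolding P_def using hpos that by (intro sum_nonneg) (simp add: less_imp_le)
  have Spos: "S > 0" unfolding S_def using hpos J1 Jnp
    by (intro sum_pos) auto
  have avg: "real m * P n \<le> real n * P m" if "1 \<le> m" "m \<le> n" "n \<le> J" for m n
    using that(2,3)
  proof (induction n rule: dec_induct)
    case base then show ?case by simp
  next
    case (step n)
    have n1: "1 \<le> n" using that step by simp
    have Pn1: "P (Suc n) = P n + h (Suc n)" unfolding P_def by simp
    have hm: "real n * h (n+1) < P n" using Jmin[OF n1] step by simp
    have IH: "real m * P n \<le> real n * P m" using step by simp
    have "real n * (real m * P (Suc n)) = real m * (real n * P n) + real m * (real n * h (Suc n))"
      using Pn1 by (simp add: algebra_simps)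
    also have "\<dots> \<le> real m * (real n * P n) + real m * P n"
      using hm that by (intro add_left_mono mult_left_mono) auto
    also have "\<dots> = (real n + 1) * (real m * P n)" by (simp add: algebra_simps)
    also have "\<dots> \<le> (real n + 1) * (real n * P m)" using IH by (intro mult_left_mono) auto
    finally have "real n * (real m * P (Suc n)) \<le> real n * ((real n + 1) * P m)"
      by (simp add: algebra_simps)
    then have "real m * P (Suc n) \<le> (real n + 1) * P m" using n1 by simp
    then show ?case by (simp add: add.commute)
  qed
  define a where "a = (\<lambda>j. S - real J * h j)"
  have Ta: "0 \<le> sum a {k..J}" if "k \<in> {1<..J}" for k
  proof -
    have k: "2 \<le> k" "k \<le> J" using that by auto
    have spl: "S = P (k-1) + sum h {k..J}"
      unfolding SP P_def using sum_split3[of 1 "k-1" J h] k by simp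
    have "sum a {k..J} = real (Suc J - k) * S - real J * sum h {k..J}"
      unfolding a_def by (simp add: sum_subtractf sum_distrib_left)
    also have "\<dots> = real J * P (k-1) - real (k-1) * S"
      using spl k by (simp add: of_nat_diff algebra_simps)
    finally show ?thesis using avg[of "k-1" J] k SP by simp
  qed
  have T1: "sum a {1..J} = 0"
    unfolding a_def using J1 by (simp add: sum_subtractf sum_distrib_left[symmetric] S_def)
  have abelJ: "0 \<le> (\<Sum>j=1..J. a j * y j)" if "\<forall>j\<in>{1..<np}. y j \<le> y (j+1)" for y
    using abel[of 1 J a y] Ta that T1 J1 Jnp by auto
  have hmono: "h j \<le> h (j+1)" if "J+1 \<le> j" "j+1 \<le> np" for j
  proof (rule ccontr)
    assume "\<not> ?thesis"
    then have dec: "h (j+1) < h j" by simp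
    have lt: "h (J+1) < h m" if m: "m \<in> {1..J}" for m
    proof -
      have "h j < max (h m) (h (j+1))" using hq[of m j "j+1"] m \<open>J+1 \<le> j\<close> \<open>j+1 \<le> np\<close> by auto
      then have hjm: "h j < h m" using dec by auto
      show ?thesis
      proof (cases "j = J+1")
        case True then show ?thesis using hjm by simp
      next
        case False
        then have "h (J+1) < max (h m) (h j)" using hq[of m "J+1" j] m \<open>J+1 \<le> j\<close> \<open>j+1 \<le> np\<close> by auto
        then show ?thesis using hjm by auto
      qed
    qed
    have "(\<Sum>m=1..J. h (J+1)) < S" unfolding S_def
      using J1 by (intro sum_strict_mono lt) auto
    then have "real J * h (J+1) < S" by simp
    then show False using Jcond \<open>J+1 \<le> j\<close> \<open>j+1 \<le> np\<close> by simp
  qed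
  define q where "q = \<alpha>/(1-\<alpha>)"
  define r where "r = 1/(1-\<alpha>)"
  define p where "p = 1/\<alpha>"
  have p1: "p > 1" unfolding p_def using a0 a1 by simp
  have q0: "q > 0" unfolding q_def using a0 a1 by simp
  have rq: "r = q + 1" unfolding q_def r_def using a1 by (simp add: field_simps)
  have qp: "q * (p - 1) = 1" unfolding q_def p_def using a0 a1 by (simp add: field_simps)
  define Sig where "Sig = (\<Sum>j'=J+1..np. h j' powr r)"
  define D where "D = S powr r + real J powr q * Sig"
  have Sig0: "Sig \<ge> 0" unfolding Sig_def by (intro sum_nonneg) simp
  have Dpos: "D > 0" unfolding D_def using Spos Sig0
    by (intro add_pos_nonneg mult_nonneg_nonneg) auto
  have Y_eq: "Y = v * S powr q / D" unfolding Y_def D_def Sig_def q_def r_def by simp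
  have Y0: "Y \<ge> 0" unfolding Y_eq using v0 Dpos by simp
  have ys: "ystar j = (if j \<le> J then Y else (real J * h j / S) powr q * Y)" for j
    unfolding ystar_def q_def by simp
  have xnn: "ystar j \<ge> 0" for j unfolding ys using Y0 by simp
  have f2: "\<forall>j\<in>{1..<np}. ystar j \<le> ystar (j+1)"
  proof
    fix j assume j: "j \<in> {1..<np}"
    consider "j < J" | "j = J" | "j > J" by linarith
    then show "ystar j \<le> ystar (j+1)"
    proof cases
      case 1 then show ?thesis unfolding ys by simp
    next
      case 2
      then have "J < np" using j by simp
      then have "real J * h (J+1) / S \<ge> 1" using Jcond Spos by simp
      then have "1 \<le> (real J * h (J+1) / S) powr q" using q0 by (intro ge_one_powr_ge_zero) auto
      then have "1 * Y \<le> (real J * h (J+1) / S) powr q * Y" using Y0 by (intro mult_right_mono) auto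
      then show ?thesis unfolding ys using 2 by simp
    next
      case 3
      have "h j \<le> h (j+1)" using hmono[of j] 3 j by simp
      then have "real J * h j / S \<le> real J * h (j+1) / S" using Spos
        by (intro divide_right_mono mult_left_mono) auto
      moreover have "0 \<le> real J * h j / S" using hpos[of j] j Spos 3 by simp
      ultimately have "(real J * h j / S) powr q \<le> (real J * h (j+1) / S) powr q"
        using q0 by (intro powr_mono2) auto
      then show ?thesis unfolding ys using 3 Y0 by (simp add: mult_right_mono)
    qed
  qed
  have hterm: "h j * ystar j = real J powr q / S powr q * h j powr r * Y" if j: "j \<in> {J+1..np}" for j
  proof -
    have hj: "h j > 0" using hpos[of j] j J1 by simp
    have e1: "(real J * h j / S) powr q = real J powr q * h j powr q / S powr q"
      using hj Spos by (simp add: powr_divide powr_mult)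
    have e2: "h j powr r = h j powr q * h j" using hj by (simp add: rq powr_add)
    show ?thesis unfolding ys using j e1 e2 by simp
  qed
  have f3: "(\<Sum>j=1..np. h j * ystar j) = v"
  proof -
    have "(\<Sum>j=1..np. h j * ystar j) = (\<Sum>j=1..J. h j * ystar j) + (\<Sum>j=Suc J..np. h j * ystar j)"
      using sum_split3[of 1 J np] J1 Jnp by simp
    also have "(\<Sum>j=1..J. h j * ystar j) = S * Y"
      unfolding S_def ys by (simp add: sum_distrib_right)
    also have "(\<Sum>j=Suc J..np. h j * ystar j) = (\<Sum>j=Suc J..np. real J powr q / S powr q * h j powr r * Y)"
      using hterm by (intro sum.cong) auto
    also have "\<dots> = real J powr q / S powr q * Sig * Y"
      unfolding Sig_def by (simp add: sum_distrib_right sum_distrib_left mult.assoc)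
    also have "S * Y + real J powr q / S powr q * Sig * Y = Y * D / S powr q"
    proof -
      have "S powr r = S * S powr q" using Spos by (simp add: rq powr_add)
      then show ?thesis unfolding D_def using Spos by (simp add: field_simps)
    qed
    also have "\<dots> = v" unfolding Y_eq using Dpos Spos by simp
    finally show ?thesis .
  qed
  have feas: "feasible W N np v ystar"
    unfolding feasible_def using xnn f2 f3 unfolding h_def by auto
  define c where "c = p * Y powr (p - 1) / S"
  define e where "e = (\<lambda>j. p * ystar j powr (p - 1))"
  have c0: "c \<ge> 0" unfolding c_def using p1 Spos by simp
  have e_form: "e j = c * (real J * h j) + (if j \<le> J then c * a j else 0)" if j: "j \<in> {1..np}" for j
  proof (cases "j \<le> J")
    case True
    then show ?thesis unfolding e_def ys c_def a_def using Spos by (simp add: field_simps)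
  next
    case False
    have hj: "h j > 0" using hpos[of j] j by simp
    have "ystar j powr (p-1) = ((real J * h j / S) powr q) powr (p-1) * Y powr (p-1)"
      unfolding ys using False Y0 by (simp add: powr_mult)
    also have "\<dots> = (real J * h j / S) * Y powr (p-1)"
      using hj Spos qp by (simp add: powr_powr)
    finally show ?thesis unfolding e_def c_def using False Spos by (simp add: field_simps)
  qed
  have key: "objective \<alpha> np y - objective \<alpha> np ystar
      = (\<Sum>j=1..np. y j powr p - ystar j powr p - e j * (y j - ystar j)) + (\<Sum>j=1..np. e j * (y j - ystar j))"
    for y
    unfolding objective_def p_def[symmetric] by (simp add: sum_subtractf)
  have ynn: "\<forall>j. 1 \<le> j \<longrightarrow> j \<le> np \<longrightarrow> 0 \<le> y j" if fy: "feasible W N np v y" for y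
  proof
    fix j show "1 \<le> j \<longrightarrow> j \<le> np \<longrightarrow> 0 \<le> y j"
    proof (induction j)
      case 0 then show ?case by simp
    next
      case (Suc j)
      show ?case
      proof (cases "j = 0")
        case True then show ?thesis using fy np1 unfolding feasible_def by simp
      next
        case False
        show ?thesis
        proof (intro impI)
          assume "Suc j \<le> np"
          then have jin: "j \<in> {1..<np}" using False by simp
          then have "y j \<le> y (j+1)" using fy unfolding feasible_def by blast
          moreover have "0 \<le> y j" using Suc jin by simp
          ultimately show "0 \<le> y (Suc j)" by simp
        qed
      qed
    qed
  qed
  have lin: "0 \<le> (\<Sum>j=1..np. e j * (y j - ystar j))" if fy: "feasible W N np v y" for y
  proof -
    define g where "g = (\<lambda>j. if j \<le> J then a j * (y j - ystar j) else 0)"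
    have ymono: "\<forall>j\<in>{1..<np}. y j \<le> y (j+1)" using fy unfolding feasible_def by simp
    have yv: "(\<Sum>j=1..np. h j * y j) = v" using fy unfolding feasible_def h_def by simp
    have "(\<Sum>j=1..np. e j * (y j - ystar j)) = (\<Sum>j=1..np. c * real J * (h j * (y j - ystar j)) + c * g j)"
      using e_form unfolding g_def by (intro sum.cong) (auto simp: algebra_simps)
    also have "\<dots> = c * real J * (\<Sum>j=1..np. h j * (y j - ystar j)) + c * (\<Sum>j=1..np. g j)"
      by (simp add: sum.distrib sum_distrib_left)
    also have "(\<Sum>j=1..np. h j * (y j - ystar j)) = 0"
      using yv f3 by (simp add: right_diff_distrib sum_subtractf)
    also have "(\<Sum>j=1..np. g j) = (\<Sum>j=1..J. g j) + (\<Sum>j=Suc J..np. g j)"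
      using sum_split3[of 1 J np] J1 Jnp by simp
    also have "(\<Sum>j=Suc J..np. g j) = 0" unfolding g_def by simp
    also have "(\<Sum>j=1..J. g j) = (\<Sum>j=1..J. a j * y j) - Y * sum a {1..J}"
      unfolding g_def ys by (simp add: right_diff_distrib sum_subtractf sum_distrib_left mult.commute)
    finally show ?thesis using abelJ[OF ymono] T1 c0 by simp
  qed
  have Dt: "0 \<le> y j powr p - ystar j powr p - e j * (y j - ystar j)" if "y j \<ge> 0" for y j
    using tangent[OF p1 xnn[of j] that] unfolding e_def by simp
  have opt: "objective \<alpha> np ystar \<le> objective \<alpha> np y" if fy: "feasible W N np v y" for y
  proof -
    have "0 \<le> (\<Sum>j=1..np. y j powr p - ystar j powr p - e j * (y j - ystar j))"
      using Dt ynn[OF fy] by (intro sum_nonneg) auto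
    then show ?thesis using key[of y] lin[OF fy] by simp
  qed
  have uniq: "\<forall>j\<in>{1..np}. y j = ystar j"
    if fy: "feasible W N np v y" and eq: "objective \<alpha> np y = objective \<alpha> np ystar" for y
  proof
    fix j assume j: "j \<in> {1..np}"
    have nn: "\<forall>i\<in>{1..np}. 0 \<le> y i powr p - ystar i powr p - e i * (y i - ystar i)"
      using Dt ynn[OF fy] by auto
    have "(\<Sum>j=1..np. y j powr p - ystar j powr p - e j * (y j - ystar j)) \<le> 0"
      using key[of y] lin[OF fy] eq by simp
    moreover have "0 \<le> (\<Sum>j=1..np. y j powr p - ystar j powr p - e j * (y j - ystar j))"
      using nn by (intro sum_nonneg) auto
    ultimately have "(\<Sum>j=1..np. y j powr p - ystar j powr p - e j * (y j - ystar j)) = 0" by simp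
    then have z: "y j powr p - ystar j powr p - e j * (y j - ystar j) = 0"
      using sum_nonneg_eq_0_iff[of "{1..np}" "\<lambda>i. y i powr p - ystar i powr p - e i * (y i - ystar i)"] nn j by simp
    show "y j = ystar j"
    proof (rule ccontr)
      assume "y j \<noteq> ystar j"
      then have "ystar j powr p + p * ystar j powr (p - 1) * (y j - ystar j) < y j powr p"
        using tangent_strict[OF p1 xnn[of j]] ynn[OF fy] j by auto
      then show False using z unfolding e_def by simp
    qed
  qed
  show ?thesis using feas opt uniq by blast
qed

end
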